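(* Fix $J=(J_1,J_2)\in\mathbb{R}^2$ and let $S(J)=\{m\in\{1,2,3,4\}: U_m(J)=\min\{U_1(J),U_2(J),U_3(J),U_4(J)\}\}$ and $\mathcal{C}_{S(J)}=\bigcup_{m\in S(J)}\mathcal{C}_m$. Suppose that for every unit ball $b$, every configuration $\sigma_b$ on $b$ belonging to $\mathcal{C}_{S(J)}$ and every unit ball $b'$ neighbouring $b$, there exists exactly one configuration $\sigma'_{b'}$ on $b'$ belonging to $\mathcal{C}_{S(J)}$ that is compatible with $\sigma_b$. Then every ground state $a$ (equivalently, every periodic $a$ with $a_b\in\mathcal{C}_{S(J)}$ for all unit balls $b$) has period not exceeding 2.
   Context: $G_2$ is the free product of three cyclic groups of order two with generators $a_1,a_2,a_3$, identified with the vertex set $V$ of the Cayley tree of order 2 ($g,h$ adjacent iff $h=ga_i$ for some $i$); $d$ is the graph distance. A configuration $\sigma:V\to\{-1,1\}$ is periodic if there is a finite-index subgroup $G^*\subset G_2$ with $\sigma(gh)=\sigma(h)$ for all $g\in G^*,h\in G_2$; it has period not exceeding 2 if such a subgroup of index at most 2 exists. A unit ball is $b=\{y:d(x,y)\le1\}$ (center $x$ and three leaves); $a_b$ is the restriction to $b$. Two distinct unit balls are neighbours if they share an edge; configurations on neighbouring balls are compatible if they coincide on the endpoints of the common edge. A configuration on a unit ball belongs to $\mathcal{C}_1,\mathcal{C}_2,\mathcal{C}_4,\mathcal{C}_3$ according as exactly $3,2,1,0$ of its leaves carry the same value as its center. $U_1(J)=\tfrac32J_1+3J_2$, $U_2(J)=\tfrac12J_1-J_2$,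 $U_3(J)=-\tfrac32J_1+3J_2$, $U_4(J)=-\tfrac12J_1-J_2$ are the values on $\mathcal{C}_1,\dots,\mathcal{C}_4$ of the ball energy $U(\sigma_b)=\tfrac12J_1\sum_{\langle x,y\rangle:\,x,y\in b}\sigma(x)\sigma(y)+J_2\sum_{\{x,y\}\subset b:\,d(x,y)=2}\sigma(x)\sigma(y)$. A ground state is a periodic configuration $a$ with $U(a_b)=\min\{U_1(J),\dots,U_4(J)\}$ for every unit ball $b$. *)

theory Defs
  imports Complex_Main "HOL-Algebra.Coset" "HOL-Library.FuncSet"
begin

text \<open>Generators a1, a2, a3 of G2 = Z2 * Z2 * Z2. Elements of G2 are reduced words
 (no two consecutive equal letters); the empty word is the identity.\<close>

datatype gen = A1 | A2 | A3

fun reduced :: "gen list \<Rightarrow> bool" where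
  "reduced [] = True"
| "reduced [a] = True"
| "reduced (a # b # w) = (a \<noteq> b \<and> reduced (b # w))"

definition V :: "gen list set" where
  "V = {w. reduced w}"

definition rmul :: "gen list \<Rightarrow> gen \<Rightarrow> gen list" where
  "rmul g a = (if g \<noteq> [] \<and> last g = a then butlast g else g @ [a])"

definition gmul :: "gen list \<Rightarrow> gen list \<Rightarrow> gen list" where
  "gmul g h = foldl rmul g h"

definition G2 :: "gen list monoid" where
  "G2 = \<lparr>carrier = V, mult = gmul, one = []\<rparr>"

text \<open>Graph distance on the Cayley tree: length of the reduced word g^{-1} h.\<close>
definition tdist :: "gen list \<Rightarrow> gen list \<Rightarrow> nat" where
  "tdist g h = length (gmul (rev g) h)"

definition adjacent :: "gen list \<Rightarrow> gen list \<Rightarrow> bool" where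
  "adjacent g h \<longleftrightarrow> (\<exists>a. h = gmul g [a])"

definition unit_ball :: "gen list \<Rightarrow> gen list set" where
  "unit_ball x = {y \<in> V. tdist x y \<le> 1}"

definition invariant_under :: "gen list set \<Rightarrow> (gen list \<Rightarrow> int) \<Rightarrow> bool" where
  "invariant_under H \<sigma> \<longleftrightarrow> (\<forall>g\<in>H. \<forall>h\<in>V. \<sigma> (gmul g h) = \<sigma> h)"

definition periodic :: "(gen list \<Rightarrow> int) \<Rightarrow> bool" where
  "periodic \<sigma> \<longleftrightarrow> (\<exists>H. subgroup H G2 \<and> finite (rcosets\<^bsub>G2\<^esub> H) \<and> invariant_under H \<sigma>)"

definition period_le_2 :: "(gen list \<Rightarrow> int) \<Rightarrow> bool" where
  "period_le_2 \<sigma> \<longleftrightarrow> (\<exists>H. subgroup H G2 \<and> finite (rcosets\<^bsub>G2\<^esub> H)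
       \<and> card (rcosets\<^bsub>G2\<^esub> H) \<le> 2 \<and> invariant_under H \<sigma>)"

definition U :: "nat \<Rightarrow> real \<Rightarrow> real \<Rightarrow> real" where
  "U m J1 J2 = (if m = 1 then 3/2 * J1 + 3 * J2
           else if m = 2 then 1/2 * J1 - J2
           else if m = 3 then - 3/2 * J1 + 3 * J2
           else - 1/2 * J1 - J2)"

definition Umin :: "real \<Rightarrow> real \<Rightarrow> real" where
  "Umin J1 J2 = Min ((\<lambda>m. U m J1 J2) ` {1,2,3,4})"

definition S :: "real \<Rightarrow> real \<Rightarrow> nat set" where
  "S J1 J2 = {m \<in> {1,2,3,4}. U m J1 J2 = Umin J1 J2}"

definition same_leaves :: "(gen list \<Rightarrow> int) \<Rightarrow> gen list \<Rightarrow> nat" where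
  "same_leaves \<sigma> x = card {y \<in> unit_ball x - {x}. \<sigma> y = \<sigma> x}"

definition in_class :: "nat \<Rightarrow> (gen list \<Rightarrow> int) \<Rightarrow> gen list \<Rightarrow> bool" where
  "in_class m \<sigma> x \<longleftrightarrow> same_leaves \<sigma> x =
     (if m = 1 then 3 else if m = 2 then 2 else if m = 3 then 0 else 1)"

definition in_CS :: "real \<Rightarrow> real \<Rightarrow> (gen list \<Rightarrow> int) \<Rightarrow> gen list \<Rightarrow> bool" where
  "in_CS J1 J2 \<sigma> x \<longleftrightarrow> (\<exists>m\<in>S J1 J2. in_class m \<sigma> x)"

definition ball_energy :: "real \<Rightarrow> real \<Rightarrow> (gen list \<Rightarrow> int) \<Rightarrow> gen list \<Rightarrow> real" where
  "ball_energy J1 J2 \<sigma> x =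
     1/2 * J1 * (\<Sum>e\<in>{{u, v} | u v. u \<in> unit_ball x \<and> v \<in> unit_ball x \<and> tdist u v = 1}.
                    \<Prod>w\<in>e. real_of_int (\<sigma> w))
   + J2 * (\<Sum>e\<in>{{u, v} | u v. u \<in> unit_ball x \<and> v \<in> unit_ball x \<and> tdist u v = 2}.
                    \<Prod>w\<in>e. real_of_int (\<sigma> w))"

definition ground_state :: "real \<Rightarrow> real \<Rightarrow> (gen list \<Rightarrow> int) \<Rightarrow> bool" where
  "ground_state J1 J2 a \<longleftrightarrow> a \<in> V \<rightarrow> {-1, 1} \<and> periodic a
      \<and> (\<forall>x\<in>V. ball_energy J1 J2 a x = Umin J1 J2)"

end

theory Submission
  imports Defs
begin


lemma reduced_snoc: "reduced (xs @ [a]) \<longleftrightarrow> reduced xs \<and> (xs = [] \<or> last xs \<noteq> a)"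
  by (induction xs rule: reduced.induct) auto

lemma reduced_Cons: "reduced (a # xs) \<Longrightarrow> reduced xs"
  by (cases xs) auto

lemma reduced_butlast: "reduced xs \<Longrightarrow> reduced (butlast xs)"
  by (induction xs rule: rev_induct) (auto simp: reduced_snoc)

lemma reduced_rev: "reduced xs \<Longrightarrow> reduced (rev xs)"
proof (induction xs rule: reduced.induct)
  case (3 a b w)
  then have "reduced (rev w @ [b])" by simp
  then show ?case using 3 by (simp only: rev.simps reduced_snoc) (auto simp add: last_rev)
qed auto

lemma rmul_reduced: "reduced x \<Longrightarrow> reduced (rmul x a)"
  by (auto simp: rmul_def reduced_butlast reduced_snoc)

lemma rmul_rmul: "reduced x \<Longrightarrow> rmul (rmul x a) a = x"
proof (cases "x \<noteq> [] \<and> last x = a")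
  case True
  assume r: "reduced x"
  then obtain y where y: "x = y @ [a]" using True
    by (metis append_butlast_last_id)
  with r have "y = [] \<or> last y \<noteq> a" by (simp add: reduced_snoc)
  then show ?thesis using y True by (auto simp: rmul_def)
next
  case False
  then show ?thesis by (auto simp: rmul_def)
qed

lemma len_rmul: "length (rmul x a) = (if x \<noteq> [] \<and> last x = a then length x - 1 else length x + 1)"
  by (simp add: rmul_def)

lemma even_len_rmul: "even (length (rmul x a)) \<longleftrightarrow> \<not> even (length x)"
  by (cases x) (auto simp: len_rmul)

lemma gmul_snoc: "gmul x (ys @ [a]) = rmul (gmul x ys) a"
  by (simp add: gmul_def)

lemma gmul_Nil[simp]: "gmul x [] = x"
  by (simp add: gmul_def)

lemma gmul_single: "gmul x [a] = rmul x a"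
  by (simp add: gmul_def)

lemma gmul_reduced: "reduced x \<Longrightarrow> reduced (gmul x y)"
  by (induction y rule: rev_induct) (auto simp: gmul_snoc rmul_reduced)

lemma gmul_even: "even (length (gmul x y)) \<longleftrightarrow> even (length x + length y)"
  by (induction y rule: rev_induct) (auto simp: gmul_snoc even_len_rmul)

lemma gmul_Nil_left: "reduced y \<Longrightarrow> gmul [] y = y"
proof (induction y rule: rev_induct)
  case Nil then show ?case by simp
next
  case (snoc a y)
  then have "reduced y" "y = [] \<or> last y \<noteq> a" by (auto simp: reduced_snoc)
  with snoc show ?case by (auto simp: gmul_snoc rmul_def)
qed

lemma gmul_rmul: "reduced x \<Longrightarrow> reduced y \<Longrightarrow> gmul x (rmul y a) = rmul (gmul x y) a"
proof (cases "y \<noteq> [] \<and> last y = a")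
  case True
  assume r: "reduced x" "reduced y"
  then obtain z where z: "y = z @ [a]" using True
    by (metis append_butlast_last_id)
  have "gmul x (rmul y a) = gmul x z" using z by (simp add: rmul_def)
  also have "\<dots> = rmul (rmul (gmul x z) a) a" using r by (simp add: rmul_rmul gmul_reduced)
  also have "\<dots> = rmul (gmul x y) a" using z by (simp add: gmul_snoc)
  finally show ?thesis .
next
  case False
  then have "rmul y a = y @ [a]" by (auto simp add: rmul_def)
  then show ?thesis by (simp add: gmul_snoc)
qed

lemma gmul_assoc: "reduced x \<Longrightarrow> reduced y \<Longrightarrow> gmul x (gmul y z) = gmul (gmul x y) z"
  by (induction z rule: rev_induct) (auto simp: gmul_snoc gmul_rmul gmul_reduced)

lemma gmul_undo: "reduced z \<Longrightarrow> gmul (gmul z h) (rev h) = z"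
proof (induction h arbitrary: z)
  case Nil then show ?case by simp
next
  case (Cons b h)
  have "gmul z (b # h) = gmul (rmul z b) h" by (simp add: gmul_def)
  then have "gmul (gmul z (b # h)) (rev (b # h)) = rmul (gmul (gmul (rmul z b) h) (rev h)) b"
    by (simp add: gmul_snoc)
  also have "\<dots> = z" using Cons by (simp add: rmul_reduced rmul_rmul)
  finally show ?case .
qed

lemma gmul_rev: "reduced x \<Longrightarrow> gmul (rev x) x = []"
  using gmul_undo[of "[]" "rev x"] gmul_Nil_left[OF reduced_rev[of x]] by simp

lemma carrier_G2[simp]: "carrier G2 = V" and mult_G2[simp]: "x \<otimes>\<^bsub>G2\<^esub> y = gmul x y"
  and one_G2[simp]: "\<one>\<^bsub>G2\<^esub> = []"
  by (simp_all add: G2_def)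

lemma group_G2: "group G2"
proof (rule groupI)
  show "\<exists>y\<in>carrier G2. y \<otimes>\<^bsub>G2\<^esub> x = \<one>\<^bsub>G2\<^esub>" if "x \<in> carrier G2" for x
    using that by (intro bexI[of _ "rev x"]) (auto simp: V_def gmul_rev reduced_rev)
qed (auto simp: V_def gmul_reduced gmul_assoc gmul_Nil_left)

interpretation G: group G2 by (rule group_G2)

lemma inv_G2: "x \<in> V \<Longrightarrow> inv\<^bsub>G2\<^esub> x = rev x"
  by (rule G.inv_equality) (auto simp: V_def gmul_rev reduced_rev)

lemma reduced_appendD: "reduced (xs @ ys) \<Longrightarrow> reduced xs"
  by (induction ys rule: rev_induct) (auto simp: reduced_snoc simp flip: append_assoc)

lemma parity_const:
  assumes nb: "\<forall>x\<in>V. \<forall>p q. a (rmul x p) = a (rmul x q)"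
  shows "u \<in> V \<Longrightarrow> a u = a (if even (length u) then [] else [A1])"
proof (induction "length u" arbitrary: u rule: less_induct)
  case less
  show ?case
  proof (cases "length u < 2")
    case True
    then consider "u = []" | p where "u = [p]"
      by (cases u) auto
    then show ?thesis
    proof cases
      case 2
      have "[] \<in> V" by (simp add: V_def)
      then have "a (rmul [] p) = a (rmul [] A1)" using nb by blast
      then show ?thesis using 2 by (simp add: rmul_def)
    qed simp
  next
    case False
    then obtain w p q where u: "u = w @ [p, q]"
      by (metis Suc_le_length_iff append_butlast_last_id butlast_snoc le_imp_less_Suc length_Cons
          list.size(3) not_less_eq numeral_2_eq_2 append_Cons append_Nil append_assoc less_Suc0 zero_less_Suc)
    have ru: "reduced ((w @ [p]) @ [q])" using less(2) u by (simp add: V_def)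
    then have pq: "p \<noteq> q" and rwp: "reduced (w @ [p])" unfolding reduced_snoc[of "w @ [p]"] by auto
    then have rw: "reduced w" using reduced_appendD by blast
    have wp: "w @ [p] \<in> V" using rwp by (simp add: V_def)
    have e1: "rmul (w @ [p]) q = u" using u pq by (simp add: rmul_def)
    have e2: "rmul (w @ [p]) p = w" by (simp add: rmul_def)
    have "a u = a w" using nb wp e1 e2 by metis
    also have "\<dots> = a (if even (length w) then [] else [A1])"
      using less(1)[of w] rw u by (simp add: V_def)
    also have "even (length w) = even (length u)" using u by simp
    finally show ?thesis .
  qed
qed

lemma period2:
  assumes nb: "\<forall>x\<in>V. \<forall>p q. a (rmul x p) = a (rmul x q)"
  shows "period_le_2 a"
proof -
  define H where "H = {w \<in> V. even (length w)}"
  define Od where "Od = {w \<in> V. odd (length w)}"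
  have sub: "subgroup H G2"
  proof (rule G.subgroupI)
    show "H \<subseteq> carrier G2" by (auto simp: H_def)
    show "H \<noteq> {}" by (auto simp: H_def V_def intro!: exI[of _ "[]"])
    show "inv\<^bsub>G2\<^esub> x \<in> H" if "x \<in> H" for x
      using that by (auto simp: H_def inv_G2 V_def reduced_rev)
    show "x \<otimes>\<^bsub>G2\<^esub> y \<in> H" if "x \<in> H" "y \<in> H" for x y
      using that by (auto simp: H_def V_def gmul_reduced gmul_even)
  qed
  have coset: "H #>\<^bsub>G2\<^esub> x \<in> {H, Od}" if x: "x \<in> V" for x
  proof -
    have "H #>\<^bsub>G2\<^esub> x = {w \<in> V. even (length w) = even (length x)}"
    proof (intro equalityI subsetI)
      fix w assume "w \<in> H #>\<^bsub>G2\<^esub> x"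
      then obtain h where "h \<in> H" "w = gmul h x" by (auto simp: r_coset_def)
      then show "w \<in> {w \<in> V. even (length w) = even (length x)}"
        using x by (auto simp: H_def V_def gmul_reduced gmul_even)
    next
      fix w assume w: "w \<in> {w \<in> V. even (length w) = even (length x)}"
      have "gmul (gmul w (rev x)) x = gmul w (gmul (rev x) x)"
        using w x by (simp add: V_def gmul_assoc reduced_rev)
      also have "\<dots> = w" using x by (simp add: V_def gmul_rev)
      finally have "w = gmul (gmul w (rev x)) x" by simp
      moreover have "gmul w (rev x) \<in> H" using w x
        by (auto simp: H_def V_def gmul_reduced gmul_even)
      ultimately show "w \<in> H #>\<^bsub>G2\<^esub> x" by (auto simp: r_coset_def)
    qed
    then show ?thesis by (auto simp: H_def Od_def)
  qed
  have rc: "rcosets\<^bsub>G2\<^esub> H \<subseteq> {H, Od}" using coset by (auto simp: RCOSETS_def)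
  then have fin: "finite (rcosets\<^bsub>G2\<^esub> H)" by (rule finite_subset) simp
  have "card (rcosets\<^bsub>G2\<^esub> H) \<le> card {H, Od}" using rc by (intro card_mono) auto
  also have "\<dots> \<le> 2" by (simp add: card_insert_le_m1)
  finally have c2: "card (rcosets\<^bsub>G2\<^esub> H) \<le> 2" .
  have inv: "invariant_under H a"
    unfolding invariant_under_def
  proof (intro ballI)
    fix g h assume g: "g \<in> H" and h: "h \<in> V"
    have gh: "gmul g h \<in> V" using g h by (auto simp: H_def V_def gmul_reduced)
    have "even (length (gmul g h)) = even (length h)" using g by (simp add: H_def gmul_even)
    then show "a (gmul g h) = a h"
      using parity_const[OF nb gh] parity_const[OF nb h] by simp
  qed
  show ?thesis unfolding period_le_2_def using sub fin c2 inv by blast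
qed

lemma rV: "x \<in> V \<Longrightarrow> reduced x" by (simp add: V_def)

lemma gmul_rev2: "reduced x \<Longrightarrow> gmul x (rev x) = []"
  using gmul_rev[of "rev x"] by (simp add: reduced_rev)

lemma rev_gmul: "x \<in> V \<Longrightarrow> u \<in> V \<Longrightarrow> rev (gmul x u) = gmul (rev u) (rev x)"
proof -
  assume x: "x \<in> V" and u: "u \<in> V"
  have "inv\<^bsub>G2\<^esub> (gmul x u) = gmul (inv\<^bsub>G2\<^esub> u) (inv\<^bsub>G2\<^esub> x)"
    using x u G.inv_mult_group[of x u] by simp
  moreover have "gmul x u \<in> V" using x u by (simp add: V_def gmul_reduced)
  ultimately show ?thesis using x u by (simp add: inv_G2)
qed

lemma tdist_mul: "x \<in> V \<Longrightarrow> u \<in> V \<Longrightarrow> v \<in> V \<Longrightarrow> tdist (gmul x u) (gmul x v) = tdist u v"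
proof -
  assume x: "x \<in> V" and u: "u \<in> V" and v: "v \<in> V"
  have rx: "reduced (rev x)" "reduced (rev u)" "reduced x" "reduced v"
    using x u v by (auto simp: reduced_rev rV)
  have "gmul (gmul (rev u) (rev x)) (gmul x v) = gmul (rev u) (gmul (rev x) (gmul x v))"
    using rx gmul_assoc[of "rev u" "rev x" "gmul x v"] by simp
  also have "gmul (rev x) (gmul x v) = gmul (gmul (rev x) x) v"
    using rx gmul_assoc[of "rev x" x v] by simp
  also have "\<dots> = v" using rx by (simp add: gmul_rev gmul_Nil_left)
  finally show ?thesis using x u v by (simp add: tdist_def rev_gmul)
qed


lemma ball_eq: assumes x: "x \<in> V"
  shows "unit_ball x = {gmul x [], gmul x [A1], gmul x [A2], gmul x [A3]}"
proof (intro equalityI subsetI)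
  fix y assume "y \<in> unit_ball x"
  then have y: "y \<in> V" and d: "length (gmul (rev x) y) \<le> 1" by (auto simp: unit_ball_def tdist_def)
  have rx: "reduced (rev x)" "reduced x" "reduced y"
    using x y by (auto simp: reduced_rev rV)
  have "gmul x (gmul (rev x) y) = gmul (gmul x (rev x)) y"
    using rx gmul_assoc[of x "rev x" y] by simp
  also have "\<dots> = y" using rx by (simp add: gmul_rev2 gmul_Nil_left)
  finally have yy: "gmul x (gmul (rev x) y) = y" .
  have zz: "gmul (rev x) y \<in> {[], [A1], [A2], [A3]}"
  proof -
    have "\<And>z::gen list. length z \<le> 1 \<Longrightarrow> z \<in> {[], [A1], [A2], [A3]}"
    proof -
      fix z :: "gen list" assume "length z \<le> 1"
      then consider "z = []" | p where "z = [p]" by (cases z) auto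
      then show "z \<in> {[], [A1], [A2], [A3]}"
      proof cases
        case (2 p) then show ?thesis by (cases p) auto
      qed simp
    qed
    with d show ?thesis by blast
  qed
  from zz have "gmul (rev x) y = [] \<or> gmul (rev x) y = [A1] \<or> gmul (rev x) y = [A2] \<or> gmul (rev x) y = [A3]"
    by (simp only: insert_iff empty_iff simp_thms)
  then show "y \<in> {gmul x [], gmul x [A1], gmul x [A2], gmul x [A3]}"
  proof (elim disjE)
    assume "gmul (rev x) y = [A1]" then show ?thesis using yy by simp
  next
    assume "gmul (rev x) y = [A2]" then show ?thesis using yy by simp
  next
    assume "gmul (rev x) y = [A3]" then show ?thesis using yy by simp
  next
    assume "gmul (rev x) y = []" then show ?thesis using yy by simp
  qed
next
  fix y assume "y \<in> {gmul x [], gmul x [A1], gmul x [A2], gmul x [A3]}"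
  then obtain z where z: "z \<in> {[], [A1], [A2], [A3]}" and yz: "y = gmul x z"
    by (metis gmul_Nil insertE empty_iff insertI1 insertI2)
  have zV: "z \<in> V" and "[] \<in> V" using z by (auto simp: V_def)
  then have "tdist (gmul x []) (gmul x z) = tdist [] z" using x by (intro tdist_mul) auto
  also have "\<dots> = length z" using zV by (simp add: tdist_def gmul_Nil_left rV)
  also have "\<dots> \<le> 1" using z by auto
  finally have "tdist x y \<le> 1" unfolding yz gmul_Nil .
  moreover have "y \<in> V" using yz x zV by (simp add: V_def gmul_reduced)
  ultimately show "y \<in> unit_ball x" by (simp add: unit_ball_def)
qed

lemma pairs_image: "{{u, v} | u v. u \<in> f ` A \<and> v \<in> f ` A \<and> P u v}
   = {{f u, f v} | u v. u \<in> A \<and> v \<in> A \<and> P (f u) (f v)}"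
  by blast

definition B0 :: "gen list set" where "B0 = {[], [A1], [A2], [A3]}"

lemma B0V: "u \<in> B0 \<Longrightarrow> u \<in> V"
  by (auto simp: B0_def V_def)

lemma ball_img: "x \<in> V \<Longrightarrow> unit_ball x = gmul x ` B0"
  by (simp add: ball_eq B0_def)

lemma tdist_self: "u \<in> V \<Longrightarrow> tdist u u = 0"
  by (simp add: tdist_def gmul_rev rV)

lemma inj_ball: "x \<in> V \<Longrightarrow> u \<in> B0 \<Longrightarrow> v \<in> B0 \<Longrightarrow> gmul x u = gmul x v \<Longrightarrow> u = v"
proof -
  assume x: "x \<in> V" and u: "u \<in> B0" and v: "v \<in> B0" and e: "gmul x u = gmul x v"
  have "tdist u v = tdist (gmul x u) (gmul x v)" using x u v by (simp add: tdist_mul B0V)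
  also have "\<dots> = 0" using e x B0V[OF v] by (simp add: tdist_self V_def gmul_reduced)
  finally show "u = v" using u v by (auto simp: B0_def tdist_def gmul_def rmul_def)
qed

lemma td_vals:
  "tdist [] [] = 0" "tdist [] [A1] = 1" "tdist [] [A2] = 1" "tdist [] [A3] = 1"
  "tdist [A1] [] = 1" "tdist [A1] [A1] = 0" "tdist [A1] [A2] = 2" "tdist [A1] [A3] = 2"
  "tdist [A2] [] = 1" "tdist [A2] [A1] = 2" "tdist [A2] [A2] = 0" "tdist [A2] [A3] = 2"
  "tdist [A3] [] = 1" "tdist [A3] [A1] = 2" "tdist [A3] [A2] = 2" "tdist [A3] [A3] = 0"
  by (simp_all add: tdist_def gmul_def rmul_def)

lemma E1_eq: assumes x: "x \<in> V"
  shows "{{u, v} | u v. u \<in> unit_ball x \<and> v \<in> unit_ball x \<and> tdist u v = 1}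
     = {{gmul x [], gmul x [A1]}, {gmul x [], gmul x [A2]}, {gmul x [], gmul x [A3]}}"
proof -
  have "{{u, v} | u v. u \<in> unit_ball x \<and> v \<in> unit_ball x \<and> tdist u v = 1}
     = {{gmul x u, gmul x v} | u v. u \<in> B0 \<and> v \<in> B0 \<and> tdist (gmul x u) (gmul x v) = 1}"
    unfolding ball_img[OF x] by (rule pairs_image)
  also have "\<dots> = {{gmul x u, gmul x v} | u v. u \<in> B0 \<and> v \<in> B0 \<and> tdist u v = 1}"
    using x by (metis (no_types, opaque_lifting) tdist_mul B0V)
  also have "\<dots> = {{gmul x [], gmul x [A1]}, {gmul x [], gmul x [A2]}, {gmul x [], gmul x [A3]}}" (is "?L = ?R")
  proof
    show "?L \<subseteq> ?R"
    proof
      fix e assume "e \<in> ?L"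
      then obtain u v where "e = {gmul x u, gmul x v}" "u \<in> B0" "v \<in> B0" "tdist u v = 1" by blast
      then show "e \<in> ?R" unfolding B0_def by (auto simp: td_vals insert_commute)
    qed
  next
    have mem: "{gmul x u0, gmul x v0} \<in> ?L" if "u0 \<in> B0" "v0 \<in> B0" "tdist u0 v0 = 1" for u0 v0
      using that by blast
    show "?R \<subseteq> ?L" using mem[of "[]" "[A1]"] mem[of "[]" "[A2]"] mem[of "[]" "[A3]"] by (simp add: B0_def td_vals)
  qed
  finally show ?thesis .
qed

lemma E2_eq: assumes x: "x \<in> V"
  shows "{{u, v} | u v. u \<in> unit_ball x \<and> v \<in> unit_ball x \<and> tdist u v = 2}
     = {{gmul x [A1], gmul x [A2]}, {gmul x [A1], gmul x [A3]}, {gmul x [A2], gmul x [A3]}}"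
proof -
  have "{{u, v} | u v. u \<in> unit_ball x \<and> v \<in> unit_ball x \<and> tdist u v = 2}
     = {{gmul x u, gmul x v} | u v. u \<in> B0 \<and> v \<in> B0 \<and> tdist (gmul x u) (gmul x v) = 2}"
    unfolding ball_img[OF x] by (rule pairs_image)
  also have "\<dots> = {{gmul x u, gmul x v} | u v. u \<in> B0 \<and> v \<in> B0 \<and> tdist u v = 2}"
    using x by (metis (no_types, opaque_lifting) tdist_mul B0V)
  also have "\<dots> = {{gmul x [A1], gmul x [A2]}, {gmul x [A1], gmul x [A3]}, {gmul x [A2], gmul x [A3]}}" (is "?L = ?R")
  proof
    show "?L \<subseteq> ?R"
    proof
      fix e assume "e \<in> ?L"
      then obtain u v where "e = {gmul x u, gmul x v}" "u \<in> B0" "v \<in> B0" "tdist u v = 2" by blast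
      then show "e \<in> ?R" unfolding B0_def by (auto simp: td_vals insert_commute)
    qed
  next
    have mem: "{gmul x u0, gmul x v0} \<in> ?L" if "u0 \<in> B0" "v0 \<in> B0" "tdist u0 v0 = 2" for u0 v0
      using that by blast
    show "?R \<subseteq> ?L" using mem[of "[A1]" "[A2]"] mem[of "[A1]" "[A3]"] mem[of "[A2]" "[A3]"] by (simp add: B0_def td_vals)
  qed
  finally show ?thesis .
qed

lemma energy_eq: assumes x: "x \<in> V"
  shows "ball_energy J1 J2 a x =
    1/2 * J1 * (a x * a (gmul x [A1]) + a x * a (gmul x [A2]) + a x * a (gmul x [A3]))
    + J2 * (a (gmul x [A1]) * a (gmul x [A2]) + a (gmul x [A1]) * a (gmul x [A3])
            + a (gmul x [A2]) * a (gmul x [A3]))"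
proof -
  have d: "gmul x u \<noteq> gmul x v" if "u \<in> B0" "v \<in> B0" "u \<noteq> v" for u v
    using inj_ball[OF x] that by blast
  have d1: "x \<noteq> gmul x [A1]" "x \<noteq> gmul x [A2]" "x \<noteq> gmul x [A3]"
    "gmul x [A1] \<noteq> gmul x [A2]" "gmul x [A1] \<noteq> gmul x [A3]" "gmul x [A2] \<noteq> gmul x [A3]"
    using d[of "[]" "[A1]"] d[of "[]" "[A2]"] d[of "[]" "[A3]"] d[of "[A1]" "[A2]"]
      d[of "[A1]" "[A3]"] d[of "[A2]" "[A3]"] by (auto simp: B0_def)
  show ?thesis
    unfolding ball_energy_def E1_eq[OF x] E2_eq[OF x] using d1 d1[symmetric]
    by (simp add: doubleton_eq_iff add.assoc)
qed



lemma ball_Nil: "unit_ball [] = {[], [A1], [A2], [A3]}"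
  using ball_eq[of "[]"] by (simp add: V_def gmul_def rmul_def)

lemma ball_A1: "unit_ball [A1] = {[A1], [], [A1, A2], [A1, A3]}"
  using ball_eq[of "[A1]"] by (simp add: V_def gmul_def rmul_def)

lemma adj01: "adjacent [] [A1]"
  unfolding adjacent_def by (rule exI[of _ A1]) (simp add: gmul_def rmul_def)

lemma NilV: "[] \<in> V" and A1V: "[A1] \<in> V" by (simp_all add: V_def)

lemma not2:
  assumes H: "\<forall>x\<in>V. \<forall>\<sigma>\<in>unit_ball x \<rightarrow>\<^sub>E {-1, 1}. in_CS J1 J2 \<sigma> x \<longrightarrow>
             (\<forall>y\<in>V. adjacent x y \<longrightarrow>
                (\<exists>!\<tau>. \<tau> \<in> unit_ball y \<rightarrow>\<^sub>E {-1, 1} \<and> in_CS J1 J2 \<tau> y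
                       \<and> \<tau> x = \<sigma> x \<and> \<tau> y = \<sigma> y))"
  shows "2 \<notin> S J1 J2"
proof
  assume S2: "2 \<in> S J1 J2"
  define \<sigma> :: "gen list \<Rightarrow> int" where "\<sigma> = restrict (\<lambda>z. if z = [A3] then -1 else 1) (unit_ball [])"
  define \<tau>1 :: "gen list \<Rightarrow> int" where "\<tau>1 = restrict (\<lambda>z. if z = [A1, A3] then -1 else 1) (unit_ball [A1])"
  define \<tau>2 :: "gen list \<Rightarrow> int" where "\<tau>2 = restrict (\<lambda>z. if z = [A1, A2] then -1 else 1) (unit_ball [A1])"
  have s1: "\<sigma> \<in> unit_ball [] \<rightarrow>\<^sub>E {-1, 1}" by (auto simp: \<sigma>_def)
  have s2_st: "{y \<in> unit_ball [] - {[]}. \<sigma> y = \<sigma> []} = {[A1], [A2]}" by (auto simp: \<sigma>_def ball_Nil)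
  then have "same_leaves \<sigma> [] = card ({[A1], [A2]})" by (simp only: same_leaves_def)
  then have s2: "in_CS J1 J2 \<sigma> []" using S2 by (auto simp: in_CS_def in_class_def intro!: bexI[of _ 2])
  have t1: "\<tau>1 \<in> unit_ball [A1] \<rightarrow>\<^sub>E {-1, 1}" "\<tau>2 \<in> unit_ball [A1] \<rightarrow>\<^sub>E {-1, 1}"
    by (auto simp: \<tau>1_def \<tau>2_def)
  have t2_st: "{y \<in> unit_ball [A1] - {[A1]}. \<tau>1 y = \<tau>1 [A1]} = {[], [A1, A2]}" by (auto simp: \<tau>1_def ball_A1)
  then have "same_leaves \<tau>1 [A1] = card ({[], [A1, A2]})" by (simp only: same_leaves_def)
  then have t2: "in_CS J1 J2 \<tau>1 [A1]" using S2 by (auto simp: in_CS_def in_class_def intro!: bexI[of _ 2])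
  have t3_st: "{y \<in> unit_ball [A1] - {[A1]}. \<tau>2 y = \<tau>2 [A1]} = {[], [A1, A3]}" by (auto simp: \<tau>2_def ball_A1)
  then have "same_leaves \<tau>2 [A1] = card ({[], [A1, A3]})" by (simp only: same_leaves_def)
  then have t3: "in_CS J1 J2 \<tau>2 [A1]" using S2 by (auto simp: in_CS_def in_class_def intro!: bexI[of _ 2])
  have e: "\<tau>1 [] = \<sigma> []" "\<tau>1 [A1] = \<sigma> [A1]" "\<tau>2 [] = \<sigma> []" "\<tau>2 [A1] = \<sigma> [A1]"
    by (simp_all add: \<tau>1_def \<tau>2_def \<sigma>_def ball_A1 ball_Nil)
  have ne: "\<tau>1 \<noteq> \<tau>2"
  proof
    assume "\<tau>1 = \<tau>2"
    then have "\<tau>1 [A1, A2] = \<tau>2 [A1, A2]" by simp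
    then show False by (simp add: \<tau>1_def \<tau>2_def ball_A1)
  qed
  have "\<exists>!\<tau>. \<tau> \<in> unit_ball [A1] \<rightarrow>\<^sub>E {-1, 1} \<and> in_CS J1 J2 \<tau> [A1] \<and> \<tau> [] = \<sigma> [] \<and> \<tau> [A1] = \<sigma> [A1]"
    using H NilV A1V adj01 s1 s2 by blast
  then show False using t1 t2 t3 e ne by blast
qed

lemma not4:
  assumes H: "\<forall>x\<in>V. \<forall>\<sigma>\<in>unit_ball x \<rightarrow>\<^sub>E {-1, 1}. in_CS J1 J2 \<sigma> x \<longrightarrow>
             (\<forall>y\<in>V. adjacent x y \<longrightarrow>
                (\<exists>!\<tau>. \<tau> \<in> unit_ball y \<rightarrow>\<^sub>E {-1, 1} \<and> in_CS J1 J2 \<tau> y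
                       \<and> \<tau> x = \<sigma> x \<and> \<tau> y = \<sigma> y))"
  shows "4 \<notin> S J1 J2"
proof
  assume S2: "4 \<in> S J1 J2"
  define \<sigma> :: "gen list \<Rightarrow> int" where "\<sigma> = restrict (\<lambda>z. if z = [A1] \<or> z = [A3] then -1 else 1) (unit_ball [])"
  define \<tau>1 :: "gen list \<Rightarrow> int" where "\<tau>1 = restrict (\<lambda>z. if z = [A1] \<or> z = [A1, A3] then -1 else 1) (unit_ball [A1])"
  define \<tau>2 :: "gen list \<Rightarrow> int" where "\<tau>2 = restrict (\<lambda>z. if z = [A1] \<or> z = [A1, A2] then -1 else 1) (unit_ball [A1])"
  have s1: "\<sigma> \<in> unit_ball [] \<rightarrow>\<^sub>E {-1, 1}" by (auto simp: \<sigma>_def)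
  have s2_st: "{y \<in> unit_ball [] - {[]}. \<sigma> y = \<sigma> []} = {[A2]}" by (auto simp: \<sigma>_def ball_Nil)
  then have "same_leaves \<sigma> [] = card ({[A2]})" by (simp only: same_leaves_def)
  then have s2: "in_CS J1 J2 \<sigma> []" using S2 by (auto simp: in_CS_def in_class_def intro!: bexI[of _ 4])
  have t1: "\<tau>1 \<in> unit_ball [A1] \<rightarrow>\<^sub>E {-1, 1}" "\<tau>2 \<in> unit_ball [A1] \<rightarrow>\<^sub>E {-1, 1}"
    by (auto simp: \<tau>1_def \<tau>2_def)
  have t2_st: "{y \<in> unit_ball [A1] - {[A1]}. \<tau>1 y = \<tau>1 [A1]} = {[A1, A3]}" by (auto simp: \<tau>1_def ball_A1)
  then have "same_leaves \<tau>1 [A1] = card ({[A1, A3]})" by (simp only: same_leaves_def)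
  then have t2: "in_CS J1 J2 \<tau>1 [A1]" using S2 by (auto simp: in_CS_def in_class_def intro!: bexI[of _ 4])
  have t3_st: "{y \<in> unit_ball [A1] - {[A1]}. \<tau>2 y = \<tau>2 [A1]} = {[A1, A2]}" by (auto simp: \<tau>2_def ball_A1)
  then have "same_leaves \<tau>2 [A1] = card ({[A1, A2]})" by (simp only: same_leaves_def)
  then have t3: "in_CS J1 J2 \<tau>2 [A1]" using S2 by (auto simp: in_CS_def in_class_def intro!: bexI[of _ 4])
  have e: "\<tau>1 [] = \<sigma> []" "\<tau>1 [A1] = \<sigma> [A1]" "\<tau>2 [] = \<sigma> []" "\<tau>2 [A1] = \<sigma> [A1]"
    by (simp_all add: \<tau>1_def \<tau>2_def \<sigma>_def ball_A1 ball_Nil)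
  have ne: "\<tau>1 \<noteq> \<tau>2"
  proof
    assume "\<tau>1 = \<tau>2"
    then have "\<tau>1 [A1, A2] = \<tau>2 [A1, A2]" by simp
    then show False by (simp add: \<tau>1_def \<tau>2_def ball_A1)
  qed
  have "\<exists>!\<tau>. \<tau> \<in> unit_ball [A1] \<rightarrow>\<^sub>E {-1, 1} \<and> in_CS J1 J2 \<tau> [A1] \<and> \<tau> [] = \<sigma> [] \<and> \<tau> [A1] = \<sigma> [A1]"
    using H NilV A1V adj01 s1 s2 by blast
  then show False using t1 t2 t3 e ne by blast
qed

lemma sign_cases:
  fixes c l1 l2 l3 :: int
  assumes "c \<in> {-1, 1}" "l1 \<in> {-1, 1}" "l2 \<in> {-1, 1}" "l3 \<in> {-1, 1}"
    and "\<not> (l1 = l2 \<and> l2 = l3)"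
  shows "1/2 * J1 * real_of_int (c * l1 + c * l2 + c * l3)
    + J2 * real_of_int (l1 * l2 + l1 * l3 + l2 * l3)
    \<in> {U 2 J1 J2, U 4 J1 J2}"
  using assms by (auto simp: U_def)

theorem lemma5p2:
  fixes J1 J2 :: real
  assumes "\<forall>x\<in>V. \<forall>\<sigma>\<in>unit_ball x \<rightarrow>\<^sub>E {-1, 1}. in_CS J1 J2 \<sigma> x \<longrightarrow>
             (\<forall>y\<in>V. adjacent x y \<longrightarrow>
                (\<exists>!\<tau>. \<tau> \<in> unit_ball y \<rightarrow>\<^sub>E {-1, 1} \<and> in_CS J1 J2 \<tau> y
                       \<and> \<tau> x = \<sigma> x \<and> \<tau> y = \<sigma> y))"
  shows "\<forall>a. ground_state J1 J2 a \<longrightarrow> period_le_2 a"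
proof (intro allI impI)
  fix a assume gs: "ground_state J1 J2 a"
  have u2: "U 2 J1 J2 \<noteq> Umin J1 J2" using not2[OF assms] by (simp add: S_def)
  have u4: "U 4 J1 J2 \<noteq> Umin J1 J2" using not4[OF assms] by (simp add: S_def)
  have av: "\<And>z. z \<in> V \<Longrightarrow> a z \<in> {-1, 1}" using gs by (auto simp: ground_state_def)
  have leaves: "a (gmul x [A1]) = a (gmul x [A2]) \<and> a (gmul x [A2]) = a (gmul x [A3])" if x: "x \<in> V" for x
  proof (rule ccontr)
    assume ne: "\<not> ?thesis"
    have lv: "gmul x [p] \<in> V" for p using x by (simp add: V_def gmul_reduced)
    have "ball_energy J1 J2 a x \<in> {U 2 J1 J2, U 4 J1 J2}"
      unfolding energy_eq[OF x] by (rule sign_cases[OF av[OF x] av[OF lv] av[OF lv] av[OF lv] ne])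
    moreover have "ball_energy J1 J2 a x = Umin J1 J2" using gs x by (simp add: ground_state_def)
    ultimately show False using u2 u4 by auto
  qed
  have nb: "\<forall>x\<in>V. \<forall>p q. a (rmul x p) = a (rmul x q)"
  proof (intro ballI allI)
    fix x p q assume "x \<in> V"
    from leaves[OF this] show "a (rmul x p) = a (rmul x q)"
      by (cases p; cases q) (simp_all add: gmul_single)
  qed
  show "period_le_2 a" by (rule period2[OF nb])
qed

end
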